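(* (a) For $n\ge1$, the Schröder number $r_{n-1}$ equals the number of triples consisting of an integer $s\ge0$ together with integer sequences $i_1\ge i_2\ge\dots\ge i_s>0$ and $0<j_1\le j_2\le\dots\le j_s$ and a sequence $r_1,\dots,r_s\in\{0,1\}$ such that $i_1-r_1>i_2-r_2>\dots>i_s-r_s>0$, $0<j_1-r_1<j_2-r_2<\dots<j_s-r_s$, and $i_k+j_k\le n+r_k$ for all $k=1,\dots,s$. (b) For $n\ge1$, the Catalan number $C_n=\frac{1}{n+1}\binom{2n}{n}$ equals the number of pairs of integer sequences $i_1>i_2>\dots>i_s>0$ and $0<j_1<j_2<\dots<j_s$ (with $s\ge0$ arbitrary) such that $i_k+j_k\le n$ for all $k$. Moreover, for each $s\ge0$ the number of such pairs of sequences of length $s$ equals the Narayana number $N(n,s+1)=\frac1n\binom{n}{s}\binom{n}{s+1}$.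
   Context: The (large) Schröder numbers are defined by $r_0=1$ and $r_n=r_{n-1}+\sum_{i=0}^{n-1}r_ir_{n-1-i}$ for $n\ge1$. *)

theory Defs
  imports Complex_Main
begin

function schroeder :: "nat \<Rightarrow> nat" where
  "schroeder 0 = 1"
| "schroeder (Suc n) = schroeder n + (\<Sum>i\<le>n. schroeder i * schroeder (n - i))"
  by pat_completeness auto
termination by (relation "measure id") auto

text \<open>Triples of part (a): sequences i_1..i_s, j_1..j_s, r_1..r_s (as lists of length s,
  0-based indices).\<close>
definition schroeder_triple :: "nat \<Rightarrow> int list \<Rightarrow> int list \<Rightarrow> int list \<Rightarrow> bool" where
  "schroeder_triple n is js rs \<longleftrightarrow>
     length js = length is \<and> length rs = length is \<and>
     (\<forall>k. Suc k < length is \<longrightarrow> is ! k \<ge> is ! Suc k) \<and>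
     (\<forall>k < length is. is ! k > 0) \<and>
     (\<forall>k < length is. js ! k > 0) \<and>
     (\<forall>k. Suc k < length is \<longrightarrow> js ! k \<le> js ! Suc k) \<and>
     (\<forall>k < length is. rs ! k \<in> {0, 1}) \<and>
     (\<forall>k. Suc k < length is \<longrightarrow> is ! k - rs ! k > is ! Suc k - rs ! Suc k) \<and>
     (\<forall>k < length is. is ! k - rs ! k > 0) \<and>
     (\<forall>k < length is. js ! k - rs ! k > 0) \<and>
     (\<forall>k. Suc k < length is \<longrightarrow> js ! k - rs ! k < js ! Suc k - rs ! Suc k) \<and>
     (\<forall>k < length is. is ! k + js ! k \<le> int n + rs ! k)"

definition catalan_pair :: "nat \<Rightarrow> int list \<Rightarrow> int list \<Rightarrow> bool" where
  "catalan_pair n is js \<longleftrightarrow>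
     length js = length is \<and>
     (\<forall>k. Suc k < length is \<longrightarrow> is ! k > is ! Suc k) \<and>
     (\<forall>k < length is. is ! k > 0) \<and>
     (\<forall>k < length is. js ! k > 0) \<and>
     (\<forall>k. Suc k < length is \<longrightarrow> js ! k < js ! Suc k) \<and>
     (\<forall>k < length is. is ! k + js ! k \<le> int n)"

end

theory Submission
  imports Defs "HOL-Computational_Algebra.Formal_Power_Series"
begin

unbundle fps_syntax

definition G :: "int set \<Rightarrow> nat \<Rightarrow> nat \<Rightarrow> (int list \<times> int list \<times> int list) set" where
 "G R m h = {(xs, ys, rs). length xs = length ys + h \<and> length rs = length xs \<and>
    sorted_wrt (>) xs \<and> sorted_wrt (>) ys \<and> set xs \<subseteq> {0..<int m} \<and> set ys \<subseteq> {0..<int m} \<and>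
    set rs \<subseteq> R \<and> (\<forall>k<length ys. xs!(k+h) + rs!(k+h) \<le> ys!k)}"

definition fI :: "nat \<Rightarrow> int \<Rightarrow> int list \<times> int list \<times> int list \<Rightarrow> int list \<times> int list \<times> int list" where
  "fI m r p = (case p of (xs,ys,rs) \<Rightarrow> (int m # xs, ys, r # rs))"
definition fD :: "nat \<Rightarrow> int list \<times> int list \<times> int list \<Rightarrow> int list \<times> int list \<times> int list" where
  "fD m p = (case p of (xs,ys,rs) \<Rightarrow> (xs, int m # ys, rs))"
definition fB :: "nat \<Rightarrow> int \<Rightarrow> int list \<times> int list \<times> int list \<Rightarrow> int list \<times> int list \<times> int list" where
  "fB m r p = (case p of (xs,ys,rs) \<Rightarrow> (int m # xs, int m # ys, r # rs))"

lemma G_0: "G R 0 h = (if h = 0 then {([],[],[])} else {})"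
  by (auto simp: G_def)

lemma below_m:
  assumes "sorted_wrt (>) xs" "set xs \<subseteq> {0..<int m + 1}" "\<forall>xs'. xs \<noteq> int m # xs'"
  shows "set xs \<subseteq> {0..<int m}"
proof (cases xs)
  case Nil then show ?thesis by simp
next
  case (Cons x xs')
  with assms have "x < int m" by auto
  with assms Cons show ?thesis by fastforce
qed

lemma head_m:
  assumes "sorted_wrt (>) (x # xs)" "set (x#xs) \<subseteq> {0..<int m + 1}" "x = int m"
  shows "set xs \<subseteq> {0..<int m}"
  using assms by fastforce

lemma G_mono: "G R m h \<subseteq> G R (Suc m) h"
  by (auto simp: G_def)

lemma fI_in:
  assumes "h > 0" "r \<in> R" "p \<in> G R m (h-1)"
  shows "fI m r p \<in> G R (Suc m) h"
proof -
  obtain h' where h: "h = Suc h'" using assms(1) by (cases h) auto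
  obtain xs ys rs where p: "p = (xs,ys,rs)" by (cases p) auto
  show ?thesis using assms(2,3) unfolding h p fI_def G_def
    by (auto simp: add_Suc_right[symmetric] simp del: add_Suc_right)
qed

lemma fD_in:
  assumes "R \<subseteq> {0,1}" "p \<in> G R m (Suc h)"
  shows "fD m p \<in> G R (Suc m) h"
proof -
  obtain xs ys rs where p: "p = (xs,ys,rs)" by (cases p) auto
  have "xs ! (k + h) + rs ! (k + h) \<le> (int m # ys) ! k" if k: "k < Suc (length ys)"
     and mem: "(xs,ys,rs) \<in> G R m (Suc h)" for k
  proof (cases k)
    case 0
    from mem have L: "length xs = length ys + Suc h" "length rs = length xs" "set xs \<subseteq> {0..<int m}" "set rs \<subseteq> R"
      by (auto simp: G_def)
    then have "xs ! h \<in> set xs" "rs ! h \<in> set rs" by auto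
    then have "xs ! h \<in> {0..<int m}" "rs ! h \<in> {0,1}" using L assms(1) by blast+
    then have "xs ! h < int m" "rs ! h \<le> 1" by auto
    then show ?thesis using 0 by simp
  next
    case (Suc k')
    then show ?thesis using mem k by (auto simp: G_def)
  qed
  then show ?thesis using assms(2) unfolding p fD_def
    by (auto simp: G_def)
qed

lemma fB_in:
  assumes "R \<subseteq> {0,1}" "0 \<in> R" "r \<in> (if h = 0 then {0} else R)" "p \<in> G R m h"
  shows "fB m r p \<in> G R (Suc m) h"
proof -
  obtain xs ys rs where p: "p = (xs,ys,rs)" by (cases p) auto
  have "(int m # xs) ! (k + h) + (r # rs) ! (k + h) \<le> (int m # ys) ! k" if k: "k < Suc (length ys)"
     and mem: "(xs,ys,rs) \<in> G R m h" for k
  proof (cases k)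
    case 0
    show ?thesis
    proof (cases h)
      case 0 then show ?thesis using \<open>k = 0\<close> assms(3) by simp
    next
      case (Suc h')
      from mem Suc have L: "length xs = length ys + Suc h'" "length rs = length xs" "set xs \<subseteq> {0..<int m}" "set rs \<subseteq> R"
        by (auto simp: G_def)
      then have "xs ! h' \<in> set xs" "rs ! h' \<in> set rs" by auto
      then have "xs ! h' \<in> {0..<int m}" "rs ! h' \<in> {0,1}" using L assms(1) by blast+
      then have "xs ! h' < int m" "rs ! h' \<le> 1" by auto
      then show ?thesis using \<open>k = 0\<close> Suc by simp
    qed
  next
    case (Suc k')
    then show ?thesis using mem k by (auto simp: G_def)
  qed
  then show ?thesis using assms(2,3,4) unfolding p fB_def
    by (auto simp: G_def split: if_splits)
qed

lemma G_Suc_cases: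
  assumes R: "R \<subseteq> {0,1}" and mem: "(xs,ys,rs) \<in> G R (Suc m) h"
  shows "(xs,ys,rs) \<in> G R m h \<or> (\<exists>r q. h > 0 \<and> r \<in> R \<and> q \<in> G R m (h-1) \<and> (xs,ys,rs) = fI m r q)
     \<or> (\<exists>q. q \<in> G R m (Suc h) \<and> (xs,ys,rs) = fD m q)
     \<or> (\<exists>r q. r \<in> (if h=0 then {0} else R) \<and> q \<in> G R m h \<and> (xs,ys,rs) = fB m r q)"
proof -
  from mem have L: "length xs = length ys + h" "length rs = length xs"
    "sorted_wrt (>) xs" "sorted_wrt (>) ys" "set xs \<subseteq> {0..<int m + 1}" "set ys \<subseteq> {0..<int m + 1}"
    "set rs \<subseteq> R" "\<forall>k<length ys. xs!(k+h) + rs!(k+h) \<le> ys!k"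
    by (auto simp: G_def)
  show ?thesis
  proof (cases "\<exists>xs'. xs = int m # xs'")
    case True
    then obtain xs' where xs: "xs = int m # xs'" by blast
    obtain r rs' where rs: "rs = r # rs'" using L(1,2) xs by (cases rs) auto
    have xs'm: "set xs' \<subseteq> {0..<int m}" using head_m[of "int m" xs' m] L xs by auto
    have rR: "r \<in> R" "set rs' \<subseteq> R" using L rs by auto
    show ?thesis
    proof (cases "\<exists>ys'. ys = int m # ys'")
      case True
      then obtain ys' where ys: "ys = int m # ys'" by blast
      have ys'm: "set ys' \<subseteq> {0..<int m}" using head_m[of "int m" ys' m] L ys by auto
      have c: "\<forall>k<length ys'. xs'!(k+h) + rs'!(k+h) \<le> ys'!k"
      proof (intro allI impI)
        fix k assume "k < length ys'"
        then have "xs!(Suc k+h) + rs!(Suc k+h) \<le> ys!Suc k" using L(8) ys by auto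
        then show "xs'!(k+h) + rs'!(k+h) \<le> ys'!k" using xs ys rs by simp
      qed
      have q: "(xs',ys',rs') \<in> G R m h" using L xs ys rs xs'm ys'm rR c by (auto simp: G_def)
      have "r \<in> (if h=0 then {0} else R)"
      proof (cases "h = 0")
        case True
        then have "xs!0 + rs!0 \<le> ys!0" using L(8) ys by auto
        then have "r \<le> 0" using xs ys rs by simp
        then show ?thesis using True rR R by auto
      qed (use rR in auto)
      then show ?thesis using q xs ys rs by (auto simp: fB_def)
    next
      case False
      have ysm: "set ys \<subseteq> {0..<int m}" using below_m[of ys m] L False by auto
      have hpos: "h > 0"
      proof (rule ccontr)
        assume "\<not> h > 0"
        then have h0: "h = 0" by simp
        then obtain y ys' where ys: "ys = y # ys'" using L(1) xs by (cases ys) auto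
        then have "xs!0 + rs!0 \<le> ys!0" using L(8) h0 by auto
        moreover have "y < int m" using ysm ys by auto
        moreover have "r \<ge> 0" using rR R by auto
        ultimately show False using xs ys rs by simp
      qed
      then obtain h' where h: "h = Suc h'" by (cases h) auto
      have c: "\<forall>k<length ys. xs'!(k+h') + rs'!(k+h') \<le> ys!k"
      proof (intro allI impI)
        fix k assume "k < length ys"
        then have "xs!(k+h) + rs!(k+h) \<le> ys!k" using L(8) by auto
        then show "xs'!(k+h') + rs'!(k+h') \<le> ys!k" using xs rs h by simp
      qed
      have q: "(xs',ys,rs') \<in> G R m (h-1)" using L xs rs xs'm ysm rR c h by (auto simp: G_def)
      then show ?thesis using q xs rs hpos rR by (auto simp: fI_def)
    qed
  next
    case False
    have xsm: "set xs \<subseteq> {0..<int m}" using below_m[of xs m] L False by auto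
    show ?thesis
    proof (cases "\<exists>ys'. ys = int m # ys'")
      case True
      then obtain ys' where ys: "ys = int m # ys'" by blast
      have ys'm: "set ys' \<subseteq> {0..<int m}" using head_m[of "int m" ys' m] L ys by auto
      have c: "\<forall>k<length ys'. xs!(k+Suc h) + rs!(k+Suc h) \<le> ys'!k"
      proof (intro allI impI)
        fix k assume "k < length ys'"
        then have "xs!(Suc k+h) + rs!(Suc k+h) \<le> ys!Suc k" using L(8) ys by auto
        then show "xs!(k+Suc h) + rs!(k+Suc h) \<le> ys'!k" using ys by simp
      qed
      have q: "(xs,ys',rs) \<in> G R m (Suc h)" using L ys xsm ys'm c by (auto simp: G_def)
      then show ?thesis using ys by (auto simp: fD_def)
    next
      case False
      have ysm: "set ys \<subseteq> {0..<int m}" using below_m[of ys m] L False by auto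
      have "(xs,ys,rs) \<in> G R m h" using L xsm ysm by (auto simp: G_def)
      then show ?thesis by blast
    qed
  qed
qed

lemma G_Suc:
  assumes "0 \<in> R" "R \<subseteq> {0,1}"
  shows "G R (Suc m) h = G R m h \<union> (\<Union>r\<in>(if h=0 then {} else R). fI m r ` G R m (h-1))
     \<union> fD m ` G R m (Suc h) \<union> (\<Union>r\<in>(if h=0 then {0} else R). fB m r ` G R m h)"
proof (rule equalityI)
  show "G R (Suc m) h \<subseteq> G R m h \<union> (\<Union>r\<in>(if h=0 then {} else R). fI m r ` G R m (h-1))
     \<union> fD m ` G R m (Suc h) \<union> (\<Union>r\<in>(if h=0 then {0} else R). fB m r ` G R m h)"
  proof
    fix p assume p: "p \<in> G R (Suc m) h"
    obtain xs ys rs where pe: "p = (xs,ys,rs)" by (cases p) auto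
    show "p \<in> G R m h \<union> (\<Union>r\<in>(if h=0 then {} else R). fI m r ` G R m (h-1))
     \<union> fD m ` G R m (Suc h) \<union> (\<Union>r\<in>(if h=0 then {0} else R). fB m r ` G R m h)"
      using G_Suc_cases[OF assms(2) p[unfolded pe]] unfolding pe by auto
  qed
next
  show "G R m h \<union> (\<Union>r\<in>(if h=0 then {} else R). fI m r ` G R m (h-1))
     \<union> fD m ` G R m (Suc h) \<union> (\<Union>r\<in>(if h=0 then {0} else R). fB m r ` G R m h) \<subseteq> G R (Suc m) h"
    using G_mono fI_in fD_in[OF assms(2)] fB_in[OF assms(2,1)]
    by (auto split: if_splits)
qed

lemma G_finite:
  assumes "0 \<in> R" "R \<subseteq> {0,1}"
  shows "finite (G R m h)"
proof (induction m arbitrary: h)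
  case 0 then show ?case by (simp add: G_0)
next
  case (Suc m)
  have fR: "finite R" using assms(2) finite_subset by blast
  show ?case unfolding G_Suc[OF assms] using Suc fR by auto
qed

lemma G_notin:
  assumes "(xs,ys,rs) \<in> G R m h"
  shows "int m \<notin> set xs" "int m \<notin> set ys"
  using assms by (auto simp: G_def)

lemma G_sum:
  assumes R: "0 \<in> R" "R \<subseteq> {0,1}"
  shows "sum g (G R (Suc m) h) = sum g (G R m h)
     + (\<Sum>r\<in>(if h=0 then {} else R). sum (g \<circ> fI m r) (G R m (h-1)))
     + sum (g \<circ> fD m) (G R m (Suc h))
     + (\<Sum>r\<in>(if h=0 then {0} else R). sum (g \<circ> fB m r) (G R m h))"
proof -
  have fR: "finite R" using assms(2) finite_subset by blast
  note fin = G_finite[OF R]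
  define A where "A = G R m h"
  define B where "B = (\<Union>r\<in>(if h=0 then {} else R). fI m r ` G R m (h-1))"
  define C where "C = fD m ` G R m (Suc h)"
  define D where "D = (\<Union>r\<in>(if h=0 then {0} else R). fB m r ` G R m h)"
  have fA: "finite A" and fB': "finite B" and fC: "finite C" and fD': "finite D"
    unfolding A_def B_def C_def D_def using fin fR by auto
  have dAB: "A \<inter> B = {}" unfolding A_def B_def
    by (auto simp: fI_def dest: G_notin)
  have dABC: "(A \<union> B) \<inter> C = {}" unfolding A_def B_def C_def
    by (auto simp: fI_def fD_def dest: G_notin)
  have dABCD: "(A \<union> B \<union> C) \<inter> D = {}" unfolding A_def B_def C_def D_def
    by (auto simp: fI_def fD_def fB_def dest: G_notin)
  have "sum g (G R (Suc m) h) = sum g (A \<union> B \<union> C \<union> D)"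
    unfolding G_Suc[OF R] A_def B_def C_def D_def ..
  also have "\<dots> = sum g A + sum g B + sum g C + sum g D"
    using fA fB' fC fD' dAB dABC dABCD by (simp add: sum.union_disjoint)
  also have "sum g B = (\<Sum>r\<in>(if h=0 then {} else R). sum (g \<circ> fI m r) (G R m (h-1)))"
  proof -
    have "sum g B = (\<Sum>r\<in>(if h=0 then {} else R). sum g (fI m r ` G R m (h-1)))"
      unfolding B_def
      by (rule sum.UNION_disjoint) (use fR fin in \<open>auto simp: fI_def\<close>)
    also have "\<dots> = (\<Sum>r\<in>(if h=0 then {} else R). sum (g \<circ> fI m r) (G R m (h-1)))"
      by (intro sum.cong refl sum.reindex) (auto simp: inj_on_def fI_def)
    finally show ?thesis .
  qed
  also have "sum g C = sum (g \<circ> fD m) (G R m (Suc h))"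
    unfolding C_def by (intro sum.reindex) (auto simp: inj_on_def fD_def)
  also have "sum g D = (\<Sum>r\<in>(if h=0 then {0} else R). sum (g \<circ> fB m r) (G R m h))"
  proof -
    have "sum g D = (\<Sum>r\<in>(if h=0 then {0} else R). sum g (fB m r ` G R m h))"
      unfolding D_def
      by (rule sum.UNION_disjoint) (use fR fin in \<open>auto simp: fB_def\<close>)
    also have "\<dots> = (\<Sum>r\<in>(if h=0 then {0} else R). sum (g \<circ> fB m r) (G R m h))"
      by (intro sum.cong refl sum.reindex) (auto simp: inj_on_def fB_def)
    finally show ?thesis .
  qed
  finally show ?thesis unfolding A_def .
qed



definition B :: "nat \<Rightarrow> int \<Rightarrow> int" where
  "B m k = (if k < 0 then 0 else int (m choose nat k))"

lemma B_neg: "k < 0 \<Longrightarrow> B m k = 0" by (simp add: B_def)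

lemma B_Suc: "B (Suc m) k = B m k + B m (k - 1)"
proof (cases "k < 0")
  case True then show ?thesis by (simp add: B_def)
next
  case False
  show ?thesis
  proof (cases "k = 0")
    case True then show ?thesis by (simp add: B_def)
  next
    case False
    with \<open>\<not> k < 0\<close> have "nat k = Suc (nat (k - 1))" by simp
    then show ?thesis using \<open>\<not> k < 0\<close> False by (simp add: B_def)
  qed
qed

lemma B_0: "B 0 k = (if k = 0 then 1 else 0)"
  by (auto simp: B_def)

definition Fi :: "nat \<Rightarrow> int \<Rightarrow> int \<Rightarrow> int" where
  "Fi m h s = B m (s + h) * B m s - B m (s + h + 1) * B m (s - 1)"

lemma Fi_Suc: "Fi (Suc m) h s = Fi m h s + Fi m (h - 1) s + Fi m (h + 1) (s - 1) + Fi m h (s - 1)"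
  unfolding Fi_def B_Suc by (simp add: algebra_simps)

lemma Fi_hneg: "Fi m (-1) s = 0"
  unfolding Fi_def by simp

lemma Fi_sneg: "Fi m h (-1) = 0"
  unfolding Fi_def by (simp add: B_neg)

definition Nf :: "nat \<Rightarrow> nat \<Rightarrow> nat \<Rightarrow> int" where
  "Nf m h s = sum (\<lambda>p. if length (fst (snd p)) = s then 1 else 0) (G {0} m h)"

lemma Nf_closed: "Nf m h s = Fi m (int h) (int s)"
proof (induction m arbitrary: h s)
  case 0
  show ?case by (auto simp: Nf_def G_0 Fi_def B_0)
next
  case (Suc m)
  have R: "(0::int) \<in> {0}" "{0::int} \<subseteq> {0,1}" by auto
  have e1: "sum ((\<lambda>p. if length (fst (snd p)) = s then 1 else 0::int) \<circ> fI m 0) (G {0} m k) = Nf m k s" for k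
    unfolding Nf_def by (intro sum.cong refl) (auto simp: fI_def)
  have e2: "sum ((\<lambda>p. if length (fst (snd p)) = s then 1 else 0::int) \<circ> fD m) (G {0} m k) = (if s = 0 then 0 else Nf m k (s - 1))" for k
    unfolding Nf_def by (cases s) (auto simp: fD_def case_prod_unfold intro!: sum.cong)
  have e3: "sum ((\<lambda>p. if length (fst (snd p)) = s then 1 else 0::int) \<circ> fB m 0) (G {0} m k) = (if s = 0 then 0 else Nf m k (s - 1))" for k
    unfolding Nf_def by (cases s) (auto simp: fB_def case_prod_unfold intro!: sum.cong)
  have "Nf (Suc m) h s = Nf m h s + (if h = 0 then 0 else Nf m (h-1) s) + (if s = 0 then 0 else Nf m (Suc h) (s-1))
      + (if s = 0 then 0 else Nf m h (s - 1))"
    unfolding Nf_def[of "Suc m"] G_sum[OF R] using e1 e2 e3 by (simp add: Nf_def)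
  also have "\<dots> = Fi (Suc m) (int h) (int s)"
    unfolding Fi_Suc Suc.IH
    by (cases h; cases s) (auto simp: Fi_hneg Fi_sneg of_nat_diff algebra_simps)
  finally show ?case .
qed



definition Sf :: "int fps" where "Sf = Abs_fps (\<lambda>n. int (schroeder n))"

lemma Sf_eq: "Sf - 1 = fps_X * (Sf + Sf^2)"
proof (rule fps_ext)
  fix n
  show "(Sf - 1) $ n = (fps_X * (Sf + Sf^2)) $ n"
  proof (cases n)
    case 0 then show ?thesis by (simp add: Sf_def)
  next
    case (Suc k)
    have "(Sf^2) $ k = (\<Sum>i\<le>k. int (schroeder i) * int (schroeder (k - i)))"
      by (simp add: power2_eq_square fps_mult_nth Sf_def atLeast0AtMost)
    then show ?thesis using Suc by (simp add: Sf_def)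
  qed
qed

definition Gh :: "nat \<Rightarrow> int fps" where "Gh h = Sf * (Sf - 1)^h"

lemma Gh_eq: "Gh h = (if h = 0 then 1 else 0) + fps_X * (fps_const (if h = 0 then 2 else 3) * Gh h
   + (if h = 0 then 0 else fps_const 2 * Gh (h - 1)) + Gh (Suc h))"
proof (cases h)
  case 0
  have "Sf = 1 + (Sf - 1)" by simp
  also have "\<dots> = 1 + fps_X * (Sf + Sf^2)" by (simp add: Sf_eq)
  also have "\<dots> = 1 + fps_X * (fps_const 2 * Sf + Sf * (Sf - 1))"
    by (simp add: algebra_simps power2_eq_square numeral_fps_const[symmetric] mult_2)
  finally show ?thesis using 0 by (simp add: Gh_def)
next
  case (Suc h')
  define T where "T = Sf - 1"
  have S: "Sf = T + 1" by (simp add: T_def)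
  have TT: "T = fps_X * (Sf + Sf^2)" by (simp add: T_def Sf_eq)
  have "Gh h = Sf * T^h' * T" by (simp add: Gh_def Suc T_def algebra_simps)
  also have "\<dots> = Sf * T^h' * (fps_X * (Sf + Sf^2))" using TT by simp
  also have "\<dots> = fps_X * (Sf * T^h' * (fps_const 3 * T + fps_const 2 + T^2))"
  proof -
    have "Sf + Sf^2 = fps_const 3 * T + fps_const 2 + T^2"
      unfolding S by (simp add: algebra_simps power2_eq_square numeral_fps_const[symmetric])
    then show ?thesis by (simp add: algebra_simps)
  qed
  also have "\<dots> = fps_X * (fps_const 3 * Gh h + fps_const 2 * Gh h' + Gh (Suc h))"
    by (simp add: Gh_def Suc T_def[symmetric] algebra_simps power2_eq_square)
  finally show ?thesis using Suc by simp
qed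

lemma Gh_Suc_nth: "Gh h $ Suc m = (if h = 0 then 2 else 3) * Gh h $ m
   + (if h = 0 then 0 else 2 * Gh (h - 1) $ m) + Gh (Suc h) $ m"
  by (subst Gh_eq) (simp split: if_splits)

lemma Gh_0_nth: "Gh h $ 0 = (if h = 0 then 1 else 0)"
  by (simp add: Gh_def fps_power_zeroth Sf_def)

lemma card_G01: "int (card (G {0,1} m h)) = Gh h $ m"
proof (induction m arbitrary: h)
  case 0
  show ?case by (simp add: G_0 Gh_0_nth)
next
  case (Suc m)
  have R: "(0::int) \<in> {0,1}" "{0::int,1} \<subseteq> {0,1}" by auto
  have "int (card (G {0,1} (Suc m) h)) = (\<Sum>p\<in>G {0,1} (Suc m) h. (1::int))" by simp
  also have "\<dots> = int (card (G {0,1} m h)) + (if h = 0 then 0 else 2 * int (card (G {0,1} m (h-1))))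
     + int (card (G {0,1} m (Suc h))) + (if h = 0 then 1 else 2) * int (card (G {0,1} m h))"
    unfolding G_sum[OF R] by (simp add: comp_def)
  also have "\<dots> = Gh h $ Suc m"
    unfolding Gh_Suc_nth Suc.IH by (simp add: algebra_simps)
  finally show ?case .
qed

lemma schroeder_G: "int (schroeder m) = int (card (G {0,1} m 0))"
  by (simp add: card_G01 Gh_def Sf_def)



lemma sorted_gt_nth: "sorted_wrt (>) (xs::int list) \<longleftrightarrow> (\<forall>k. Suc k < length xs \<longrightarrow> xs ! Suc k < xs ! k)"
  by (subst sorted_wrt_iff_nth_Suc_transp) (auto simp: transp_def)

lemma set_sub_nth: "set xs \<subseteq> A \<longleftrightarrow> (\<forall>k<length xs. xs ! k \<in> A)"
  by (fastforce simp: set_conv_nth)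

lemma G_nth: "(xs,ys,rs) \<in> G R m h \<longleftrightarrow> length xs = length ys + h \<and> length rs = length xs \<and>
    (\<forall>k. Suc k < length xs \<longrightarrow> xs ! Suc k < xs ! k) \<and> (\<forall>k. Suc k < length ys \<longrightarrow> ys ! Suc k < ys ! k) \<and>
    (\<forall>k<length xs. 0 \<le> xs ! k \<and> xs ! k < int m) \<and> (\<forall>k<length ys. 0 \<le> ys ! k \<and> ys ! k < int m) \<and>
    (\<forall>k<length rs. rs ! k \<in> R) \<and> (\<forall>k<length ys. xs!(k+h) + rs!(k+h) \<le> ys!k)"
  unfolding G_def sorted_gt_nth set_sub_nth by auto

definition psiC :: "nat \<Rightarrow> int list \<times> int list \<times> int list \<Rightarrow> int list \<times> int list" where
  "psiC m p = (map (\<lambda>x. x + 1) (fst p), map (\<lambda>y. int m - y) (fst (snd p)))"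
definition phiC :: "nat \<Rightarrow> int list \<times> int list \<Rightarrow> int list \<times> int list \<times> int list" where
  "phiC m q = (map (\<lambda>i. i - 1) (fst q), map (\<lambda>j. int m - j) (snd q), replicate (length (fst q)) 0)"

lemma bij_C:
  assumes n: "n = Suc m"
  shows "bij_betw (psiC m) {p \<in> G {0} m 0. P (length (fst (snd p)))}
           {q \<in> {(is, js). catalan_pair n is js}. P (length (fst q))}"
proof (rule bij_betw_byWitness[where f' = "phiC m"])
  show "\<forall>a\<in>{p \<in> G {0} m 0. P (length (fst (snd p)))}. phiC m (psiC m a) = a"
  proof
    fix a assume "a \<in> {p \<in> G {0} m 0. P (length (fst (snd p)))}"
    then obtain xs ys rs where a: "a = (xs,ys,rs)" "(xs,ys,rs) \<in> G {0} m 0" by (cases a) auto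
    then have "rs = replicate (length xs) 0" unfolding G_nth
      by (auto intro: nth_equalityI)
    then show "phiC m (psiC m a) = a" using a by (simp add: phiC_def psiC_def comp_def)
  qed
  show "\<forall>a'\<in>{q \<in> {(is, js). catalan_pair n is js}. P (length (fst q))}. psiC m (phiC m a') = a'"
    by (auto simp: phiC_def psiC_def comp_def)
  show "psiC m ` {p \<in> G {0} m 0. P (length (fst (snd p)))} \<subseteq> {q \<in> {(is, js). catalan_pair n is js}. P (length (fst q))}"
  proof
    fix q assume "q \<in> psiC m ` {p \<in> G {0} m 0. P (length (fst (snd p)))}"
    then obtain xs ys rs where q: "q = psiC m (xs,ys,rs)" and mem: "(xs,ys,rs) \<in> G {0} m 0" and P: "P (length ys)"
      by auto
    have "catalan_pair n (map (\<lambda>x. x + 1) xs) (map (\<lambda>y. int m - y) ys)"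
      using mem unfolding G_nth catalan_pair_def n by force
    then show "q \<in> {q \<in> {(is, js). catalan_pair n is js}. P (length (fst q))}"
      using P mem q by (auto simp: psiC_def G_def)
  qed
  show "phiC m ` {q \<in> {(is, js). catalan_pair n is js}. P (length (fst q))} \<subseteq> {p \<in> G {0} m 0. P (length (fst (snd p)))}"
  proof
    fix q assume "q \<in> phiC m ` {q \<in> {(is, js). catalan_pair n is js}. P (length (fst q))}"
    then obtain "is" js where q: "q = phiC m (is, js)" and c: "catalan_pair n is js" and P: "P (length is)"
      by auto
    have "(map (\<lambda>i. i - 1) is, map (\<lambda>j. int m - j) js, replicate (length is) (0::int)) \<in> G {0} m 0"
      using c unfolding G_nth catalan_pair_def n by force
    then show "q \<in> {p \<in> G {0} m 0. P (length (fst (snd p)))}"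
      using P c q by (auto simp: phiC_def catalan_pair_def)
  qed
qed

definition psiS :: "nat \<Rightarrow> int list \<times> int list \<times> int list \<Rightarrow> int list \<times> int list \<times> int list" where
  "psiS m p = (case p of (xs,ys,rs) \<Rightarrow> (map2 (\<lambda>x r. x + 1 + r) xs rs, map2 (\<lambda>y r. int m - y + r) ys rs, rs))"
definition phiS :: "nat \<Rightarrow> int list \<times> int list \<times> int list \<Rightarrow> int list \<times> int list \<times> int list" where
  "phiS m p = (case p of (is,js,rs) \<Rightarrow> (map2 (\<lambda>i r. i - 1 - r) is rs, map2 (\<lambda>j r. int m - j + r) js rs, rs))"

lemma psiS_in:
  assumes n: "n = Suc m" and mem: "(xs,ys,rs) \<in> G {0,1} m 0"
  shows "schroeder_triple n (map2 (\<lambda>x r. x + 1 + r) xs rs) (map2 (\<lambda>y r. int m - y + r) ys rs) rs"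
proof -
  from mem have L: "length ys = length xs" "length rs = length xs"
    "\<forall>k. Suc k < length xs \<longrightarrow> xs ! Suc k < xs ! k" "\<forall>k. Suc k < length ys \<longrightarrow> ys ! Suc k < ys ! k"
    "\<forall>k<length xs. 0 \<le> xs ! k \<and> xs ! k < int m" "\<forall>k<length ys. 0 \<le> ys ! k \<and> ys ! k < int m"
    "\<forall>k<length rs. rs ! k = 0 \<or> rs ! k = 1" "\<forall>k<length ys. xs!k + rs!k \<le> ys!k"
    unfolding G_nth by auto
  show ?thesis unfolding schroeder_triple_def n
  proof (intro conjI allI impI)
    fix k assume k: "Suc k < length (map2 (\<lambda>x r. x + 1 + r) xs rs)"
    then have a: "xs ! Suc k < xs ! k" "ys ! Suc k < ys ! k" "rs ! k = 0 \<or> rs ! k = 1" "rs ! Suc k = 0 \<or> rs ! Suc k = 1"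
      using L by auto
    then have b: "0 \<le> rs ! k" "rs ! k \<le> 1" "0 \<le> rs ! Suc k" "rs ! Suc k \<le> 1" by auto
    show "map2 (\<lambda>x r. x + 1 + r) xs rs ! Suc k \<le> map2 (\<lambda>x r. x + 1 + r) xs rs ! k"
      using a b k L by auto
    show "map2 (\<lambda>y r. int m - y + r) ys rs ! k \<le> map2 (\<lambda>y r. int m - y + r) ys rs ! Suc k"
      using a b k L by auto
    show "map2 (\<lambda>x r. x + 1 + r) xs rs ! k - rs ! k > map2 (\<lambda>x r. x + 1 + r) xs rs ! Suc k - rs ! Suc k"
      using a b k L by auto
    show "map2 (\<lambda>y r. int m - y + r) ys rs ! k - rs ! k < map2 (\<lambda>y r. int m - y + r) ys rs ! Suc k - rs ! Suc k"
      using a b k L by auto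
  next
    fix k assume k: "k < length (map2 (\<lambda>x r. x + 1 + r) xs rs)"
    then have a: "0 \<le> xs ! k" "xs ! k < int m" "0 \<le> ys ! k" "ys ! k < int m" "rs ! k = 0 \<or> rs ! k = 1" "xs!k + rs!k \<le> ys!k"
      using L by auto
    then have b: "0 \<le> rs ! k" "rs ! k \<le> 1" by auto
    show "map2 (\<lambda>x r. x + 1 + r) xs rs ! k > 0" using a b k L by auto
    show "map2 (\<lambda>y r. int m - y + r) ys rs ! k > 0" using a b k L by auto
    show "rs ! k \<in> {0, 1}" using a by auto
    show "map2 (\<lambda>x r. x + 1 + r) xs rs ! k - rs ! k > 0" using a b k L by auto
    show "map2 (\<lambda>y r. int m - y + r) ys rs ! k - rs ! k > 0" using a b k L by auto
    show "map2 (\<lambda>x r. x + 1 + r) xs rs ! k + map2 (\<lambda>y r. int m - y + r) ys rs ! k \<le> int (Suc m) + rs ! k"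
      using a b k L by auto
  qed (use L in auto)
qed

lemma phiS_in:
  assumes n: "n = Suc m" and t: "schroeder_triple n is js rs"
  shows "(map2 (\<lambda>i r. i - 1 - r) is rs, map2 (\<lambda>j r. int m - j + r) js rs, rs) \<in> G {0,1} m 0"
proof -
  from t have L: "length js = length is" "length rs = length is"
     "\<forall>k<length is. rs ! k = 0 \<or> rs ! k = 1"
     "\<forall>k. Suc k < length is \<longrightarrow> is ! k - rs ! k > is ! Suc k - rs ! Suc k"
     "\<forall>k < length is. is ! k - rs ! k > 0"
     "\<forall>k < length is. js ! k - rs ! k > 0"
     "\<forall>k. Suc k < length is \<longrightarrow> js ! k - rs ! k < js ! Suc k - rs ! Suc k"
     "\<forall>k < length is. is ! k + js ! k \<le> int n + rs ! k"
    unfolding schroeder_triple_def by auto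
  show ?thesis unfolding G_nth
  proof (intro conjI allI impI)
    fix k assume k: "Suc k < length (map2 (\<lambda>i r. i - 1 - r) is rs)"
    then show "map2 (\<lambda>i r. i - 1 - r) is rs ! Suc k < map2 (\<lambda>i r. i - 1 - r) is rs ! k"
      using L by auto
  next
    fix k assume k: "Suc k < length (map2 (\<lambda>j r. int m - j + r) js rs)"
    then show "map2 (\<lambda>j r. int m - j + r) js rs ! Suc k < map2 (\<lambda>j r. int m - j + r) js rs ! k"
      using L by auto
  next
    fix k assume k: "k < length (map2 (\<lambda>i r. i - 1 - r) is rs)"
    then have a: "rs ! k = 0 \<or> rs ! k = 1" "is ! k - rs ! k > 0" "js ! k - rs ! k > 0" "is ! k + js ! k \<le> int n + rs ! k"
      using L by auto
    then have b: "0 \<le> rs ! k" "rs ! k \<le> 1" by auto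
    show "0 \<le> map2 (\<lambda>i r. i - 1 - r) is rs ! k" using a b k L by auto
    have e: "map2 (\<lambda>i r. i - 1 - r) is rs ! k = is ! k - 1 - rs ! k" using k L by simp
    have nn: "int n = int m + 1" by (simp add: n)
    show "map2 (\<lambda>i r. i - 1 - r) is rs ! k < int m" unfolding e using a(3,4) b nn by linarith
  next
    fix k assume k: "k < length (map2 (\<lambda>j r. int m - j + r) js rs)"
    then have a: "rs ! k = 0 \<or> rs ! k = 1" "is ! k - rs ! k > 0" "js ! k - rs ! k > 0" "is ! k + js ! k \<le> int n + rs ! k"
      using L by auto
    then have b: "0 \<le> rs ! k" "rs ! k \<le> 1" by auto
    have e: "map2 (\<lambda>j r. int m - j + r) js rs ! k = int m - js ! k + rs ! k" using k L by simp
    have nn: "int n = int m + 1" by (simp add: n)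
    show "0 \<le> map2 (\<lambda>j r. int m - j + r) js rs ! k" unfolding e using a(2,4) b nn by linarith
    show "map2 (\<lambda>j r. int m - j + r) js rs ! k < int m" using a b k L by auto
    show "map2 (\<lambda>i r. i - 1 - r) is rs ! (k + 0) + rs ! (k + 0) \<le> map2 (\<lambda>j r. int m - j + r) js rs ! k"
      using a b k L n by auto
  next
    fix k assume k: "k < length rs"
    then show "rs ! k \<in> {0,1}" using L by auto
  qed (use L in auto)
qed

lemma bij_S:
  assumes n: "n = Suc m"
  shows "bij_betw (psiS m) (G {0,1} m 0) {(is, js, rs). schroeder_triple n is js rs}"
proof (rule bij_betw_byWitness[where f' = "phiS m"])
  show "\<forall>a\<in>G {0,1} m 0. phiS m (psiS m a) = a"
  proof
    fix a assume "a \<in> G {0,1} m 0"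
    then obtain xs ys rs where a: "a = (xs,ys,rs)" "(xs,ys,rs) \<in> G {0,1} m 0" by (cases a) auto
    then have "length ys = length xs" "length rs = length xs" unfolding G_def by auto
    then show "phiS m (psiS m a) = a" using a
      by (auto simp: phiS_def psiS_def intro!: nth_equalityI)
  qed
  show "\<forall>a'\<in>{(is, js, rs). schroeder_triple n is js rs}. psiS m (phiS m a') = a'"
  proof
    fix a assume "a \<in> {(is, js, rs). schroeder_triple n is js rs}"
    then obtain "is" js rs where a: "a = (is,js,rs)" "schroeder_triple n is js rs" by (cases a) auto
    then have "length js = length is" "length rs = length is" unfolding schroeder_triple_def by auto
    then show "psiS m (phiS m a) = a" using a
      by (auto simp: phiS_def psiS_def intro!: nth_equalityI)
  qed
  show "psiS m ` G {0,1} m 0 \<subseteq> {(is, js, rs). schroeder_triple n is js rs}"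
    using psiS_in[OF n] by (auto simp: psiS_def)
  show "phiS m ` {(is, js, rs). schroeder_triple n is js rs} \<subseteq> G {0,1} m 0"
    using phiS_in[OF n] by (auto simp: phiS_def)
qed



lemma rel_choose: "real (Suc k) * real (m choose Suc k) = (real m - real k) * real (m choose k)"
proof (cases "k \<le> m")
  case True
  have "Suc k * (m choose Suc k) = (m - k) * (m choose k)"
    using binomial_absorption[of k m] binomial_absorb_comp[of m k] by simp
  then have "real (Suc k * (m choose Suc k)) = real ((m - k) * (m choose k))" by simp
  then show ?thesis using True by (simp add: of_nat_diff algebra_simps)
next
  case False
  then show ?thesis by (simp add: binomial_eq_0)
qed

lemma Fi_0_expand: "real_of_int (Fi m 0 (int s)) = real (m choose s) ^ 2
   - (if s = 0 then 0 else real (m choose (s + 1)) * real (m choose (s - 1)))"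
proof (cases s)
  case 0
  have "Fi m 0 0 = 1" by (simp add: Fi_def B_def)
  then show ?thesis using 0 by simp
qed (auto simp: Fi_def B_def power2_eq_square nat_add_distrib)

lemma nara:
  "real (Suc m) * real_of_int (Fi m 0 (int s)) = real (Suc m choose s) * real (Suc m choose (s+1))"
proof (cases s)
  case 0
  have "Fi m 0 0 = 1" by (simp add: Fi_def B_def)
  then show ?thesis using 0 by simp
next
  case (Suc t)
  show ?thesis
  proof (cases "t < m")
    case False
    have "real_of_int (Fi m 0 (int s)) = 0" unfolding Fi_0_expand using Suc False by (simp add: binomial_eq_0)
    moreover have "real (Suc m choose (s+1)) = 0" using Suc False by (simp add: binomial_eq_0)
    ultimately show ?thesis by simp
  next
    case True
    define a where "a = real (m choose t)"
    define b where "b = real (m choose Suc t)"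
    define c where "c = real (m choose Suc (Suc t))"
    have r1: "real (Suc t) * b = (real m - real t) * a" unfolding a_def b_def by (rule rel_choose)
    have r2: "real (Suc (Suc t)) * c = (real m - real (Suc t)) * b" unfolding c_def b_def by (rule rel_choose)
    have u: "real m - real t > 0" using True by simp
    define u where "u = real m - real t"
    have u0: "u > 0" using True by (simp add: u_def)
    have r1': "u * a = (real t + 1) * b" using r1 by (simp add: u_def algebra_simps)
    have r2': "(real t + 2) * c = (u - 1) * b" using r2 by (simp add: u_def algebra_simps)
    have mu: "real m = u + real t" by (simp add: u_def)
    have lhs: "real_of_int (Fi m 0 (int s)) = b^2 - c * a"
      unfolding Fi_0_expand using Suc by (simp add: a_def b_def c_def)
    have rhs: "real (Suc m choose s) * real (Suc m choose (s+1)) = (a + b) * (b + c)"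
      using Suc by (simp add: a_def b_def c_def)
    have "(real m + 1) * (b^2 - c * a) * (u * (real t + 2)) =
          (real m + 1) * (b^2 * u * (real t + 2) - ((real t + 2) * c) * (u * a))"
      by (simp add: algebra_simps power2_eq_square)
    also have "\<dots> = (real m + 1) * (b^2 * u * (real t + 2) - ((u - 1) * b) * ((real t + 1) * b))"
      by (simp only: r1' r2')
    also have "\<dots> = ((real t + 1) * b + u * b) * ((real t + 2) * b + (u - 1) * b)"
      unfolding mu by (simp add: algebra_simps power2_eq_square)
    also have "\<dots> = (u * a + u * b) * ((real t + 2) * b + (real t + 2) * c)"
      by (simp only: r1' r2')
    also have "\<dots> = (a + b) * (b + c) * (u * (real t + 2))"
      by (simp add: algebra_simps)
    finally have key: "(real m + 1) * (b^2 - c * a) * (u * (real t + 2)) = (a + b) * (b + c) * (u * (real t + 2))" .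
    have nz: "u * (real t + 2) \<noteq> 0" using u0 by simp
    have "(real m + 1) * (b^2 - c * a) = (a + b) * (b + c)"
      using key nz by simp
    then show ?thesis unfolding lhs rhs by (simp add: add.commute)
  qed
qed

lemma cat_sum: assumes "n = Suc m"
  shows "(\<Sum>s\<le>m. real (n choose s) * real (n choose (s+1))) = real ((2*n) choose m)"
proof -
  have "(\<Sum>s\<le>m. (n choose s) * (n choose (s+1))) = (\<Sum>s\<le>m. (n choose s) * (n choose (m - s)))"
  proof (intro sum.cong refl)
    fix s assume "s \<in> {..m}"
    then have "n choose (m - s) = n choose (n - (m - s))" using assms by (intro binomial_symmetric) auto
    also have "n - (m - s) = s + 1" using \<open>s \<in> {..m}\<close> assms by auto
    finally show "(n choose s) * (n choose (s+1)) = (n choose s) * (n choose (m - s))" by simp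
  qed
  also have "\<dots> = (n + n) choose m" by (rule vandermonde)
  finally have "(\<Sum>s\<le>m. (n choose s) * (n choose (s+1))) = (2*n) choose m" by (simp add: mult_2)
  then have "real (\<Sum>s\<le>m. (n choose s) * (n choose (s+1))) = real ((2*n) choose m)" by simp
  then show ?thesis by simp
qed

lemma cat_final: assumes "n = Suc m"
  shows "real ((2*n) choose m) / real n = 1 / (real n + 1) * real ((2 * n) choose n)"
proof -
  define N where "N = 2 * n"
  have mn: "Suc m = n" "N - m = n + 1" using assms by (auto simp: N_def)
  have "Suc m * (N choose Suc m) = (N - m) * (N choose m)"
    using binomial_absorption[of m N] binomial_absorb_comp[of N m] by (simp only:)
  then have "n * (N choose n) = (n + 1) * (N choose m)" by (simp only: mn)
  then have "real n * real (N choose n) = (real n + 1) * real (N choose m)"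
    by (metis of_nat_Suc of_nat_mult Suc_eq_plus1 add.commute)
  moreover have "real n > 0" using assms by simp
  ultimately show ?thesis unfolding N_def[symmetric] by (simp add: field_simps)
qed



lemma G_len: assumes "(xs,ys,rs) \<in> G R m h" shows "length ys \<le> m"
proof -
  have s: "sorted_wrt (>) ys" "set ys \<subseteq> {0..<int m}" using assms by (auto simp: G_def)
  have "sorted_wrt (<) (rev ys)" using s(1) by (simp add: sorted_wrt_rev)
  then have "distinct (rev ys)" using strict_sorted_iff by blast
  then have "distinct ys" by simp
  then have "length ys = card (set ys)" by (simp add: distinct_card)
  also have "\<dots> \<le> card {0..<int m}" using s(2) by (intro card_mono) auto
  also have "\<dots> = m" by simp
  finally show ?thesis .
qed

lemma card_filter_Nf:
  "int (card {p \<in> G {0} m h. length (fst (snd p)) = s}) = Nf m h s"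
proof -
  have fin: "finite (G {0} m h)" by (rule G_finite) auto
  have "Nf m h s = sum (\<lambda>_. 1) {p \<in> G {0} m h. length (fst (snd p)) = s}"
    unfolding Nf_def by (rule sum.inter_filter[symmetric, OF fin])
  then show ?thesis by simp
qed

lemma narayana_count:
  assumes n: "n = Suc m"
  shows "real (card {(is, js). catalan_pair n is js \<and> length is = s})
           = 1 / real n * real (n choose s) * real (n choose (s + 1))"
proof -
  have eq: "{(is, js). catalan_pair n is js \<and> length is = s} = {q \<in> {(is, js). catalan_pair n is js}. length (fst q) = s}"
    by auto
  have "card {(is, js). catalan_pair n is js \<and> length is = s} = card {p \<in> G {0} m 0. length (fst (snd p)) = s}"
    unfolding eq using bij_betw_same_card[OF bij_C[OF n, of "\<lambda>l. l = s"]] by simp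
  then have "real (card {(is, js). catalan_pair n is js \<and> length is = s}) = real_of_int (int (card {p \<in> G {0} m 0. length (fst (snd p)) = s}))"
    by simp
  also have "\<dots> = real_of_int (Nf m 0 s)" unfolding card_filter_Nf ..
  also have "\<dots> = real_of_int (Fi m 0 (int s))" by (simp add: Nf_closed)
  also have "\<dots> = real (n choose s) * real (n choose (s+1)) / real n"
  proof -
    have h: "real n * real_of_int (Fi m 0 (int s)) = real (n choose s) * real (n choose (s+1))"
      using nara[of m s] unfolding n .
    have "real n > 0" using n by simp
    with h show ?thesis by (simp add: field_simps)
  qed
  finally show ?thesis by simp
qed

lemma catalan_count:
  assumes n: "n = Suc m"
  shows "real (card {(is, js). catalan_pair n is js}) = 1 / (real n + 1) * real ((2 * n) choose n)"
proof -
  have fin: "finite (G {0} m 0)" by (rule G_finite) auto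
  have "card {(is, js). catalan_pair n is js} = card (G {0} m 0)"
    using bij_betw_same_card[OF bij_C[OF n, of "\<lambda>_. True"]] by simp
  also have "G {0} m 0 = (\<Union>s\<in>{..m}. {p \<in> G {0} m 0. length (fst (snd p)) = s})"
    using G_len by fastforce
  also have "card \<dots> = (\<Sum>s\<le>m. card {p \<in> G {0} m 0. length (fst (snd p)) = s})"
    using fin by (intro card_UN_disjoint) auto
  finally have "real (card {(is, js). catalan_pair n is js}) = (\<Sum>s\<le>m. real (card {p \<in> G {0} m 0. length (fst (snd p)) = s}))"
    by simp
  also have "\<dots> = (\<Sum>s\<le>m. real (card {(is, js). catalan_pair n is js \<and> length is = s}))"
  proof (intro sum.cong refl)
    fix s
    have eq: "{(is, js). catalan_pair n is js \<and> length is = s} = {q \<in> {(is, js). catalan_pair n is js}. length (fst q) = s}"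
      by auto
    show "real (card {p \<in> G {0} m 0. length (fst (snd p)) = s}) = real (card {(is, js). catalan_pair n is js \<and> length is = s})"
      unfolding eq using bij_betw_same_card[OF bij_C[OF n, of "\<lambda>l. l = s"]] by simp
  qed
  also have "\<dots> = (\<Sum>s\<le>m. real (n choose s) * real (n choose (s+1))) / real n"
    unfolding narayana_count[OF n] by (simp add: sum_divide_distrib)
  also have "\<dots> = real ((2*n) choose m) / real n" using cat_sum[OF n] by simp
  also have "\<dots> = 1 / (real n + 1) * real ((2 * n) choose n)" by (rule cat_final[OF n])
  finally show ?thesis .
qed

lemma schroeder_count:
  assumes n: "n = Suc m"
  shows "schroeder (n - 1) = card {(is, js, rs). schroeder_triple n is js rs}"
proof -
  have "card {(is, js, rs). schroeder_triple n is js rs} = card (G {0,1} m 0)"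
    using bij_betw_same_card[OF bij_S[OF n]] by simp
  moreover have "schroeder m = card (G {0,1} m 0)" using schroeder_G[of m] by simp
  ultimately show ?thesis using n by simp
qed

theorem corollary2p5:
  fixes n :: nat
  assumes "n \<ge> 1"
  shows "schroeder (n - 1) = card {(is, js, rs). schroeder_triple n is js rs} \<and>
    real (card {(is, js). catalan_pair n is js})
           = 1 / (real n + 1) * real ((2 * n) choose n) \<and>
    (\<forall>s::nat. real (card {(is, js). catalan_pair n is js \<and> length is = s})
           = 1 / real n * real (n choose s) * real (n choose (s + 1)))"
proof -
  obtain m where n: "n = Suc m" using assms by (cases n) auto
  show ?thesis using schroeder_count[OF n] catalan_count[OF n] narayana_count[OF n] by blast
qed


end
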